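(* Let $\Gamma$ be a finite undirected simple graph which is a disjoint union $\Gamma=\bigsqcup_{i=1}^k\Gamma^{(i)}$ of graphs, the vertices of $\Gamma^{(i)}$ being $x^{(i)}_1,\dots,x^{(i)}_{n^{(i)}}$, and let $y_1,\dots,y_N$ be the commutator generators of $G_\Gamma$. Let $z^{(i)}_j,t_l\in\mathbb{Z}$ be such that there exist $i_1\neq i_2$ and indices $j_1,j_2$ with $z^{(i_1)}_{j_1}\neq0$ and $z^{(i_2)}_{j_2}\neq0$. Then \[Z_{G_\Gamma}\Big(\prod_i\prod_j (x^{(i)}_j)^{z^{(i)}_j}\prod_{l=1}^N y_l^{t_l}\Big)=\Big\langle\prod_i\prod_j (x^{(i)}_j)^{z^{(i)}_j/d}\Big\rangle\times\gamma_2(G_\Gamma)\cong\mathbb{Z}^{N+1},\] where $d=\gcd_{i,j}z^{(i)}_j$ and $Z_{G_\Gamma}$ denotes the centralizer.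
   Context: For a finite undirected simple graph $\Gamma$ with vertex set $\{x_1,\dots,x_n\}$ and edge set $E$, the group $G_\Gamma$ is defined by the presentation with generators $x_1,\dots,x_n$ and $y_{i,j}$ for each pair $i<j$ with $x_ix_j\notin E$, and relations $[x_j,x_i]=1$ if $x_ix_j\in E$; $[x_j,x_i]=y_{i,j}$ if $x_ix_j\notin E$ and $i<j$; and $[x_l,y_{i,j}]=1$ for all $l$ and all such $y_{i,j}$. $N$ is the number of non-adjacent pairs and the $y_{i,j}$ are enumerated $y_1,\dots,y_N$; they generate $\gamma_2(G_\Gamma)=[G_\Gamma,G_\Gamma]\cong\mathbb{Z}^N$. The disjoint union of graphs has as vertex and edge sets the disjoint unions of those of the pieces. The products $\prod_i\prod_j$ are taken in a fixed order of the vertices. *)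

theory Defs
  imports "HOL-Algebra.Algebra"
begin

text \<open>Graph on vertex set {0..<n} (vertex v stands for x_(v+1)); E symmetric, irreflexive.
  The non-adjacent pairs (i,j), i<j, index the commutator generators y_(i,j).\<close>

definition nonadj :: "nat \<Rightarrow> (nat \<Rightarrow> nat \<Rightarrow> bool) \<Rightarrow> (nat \<times> nat) set" where
  "nonadj n E = {(i, j). i < j \<and> j < n \<and> \<not> E i j}"

definition nonadj_list :: "nat \<Rightarrow> (nat \<Rightarrow> nat \<Rightarrow> bool) \<Rightarrow> (nat \<times> nat) list" where
  "nonadj_list n E = [(i, j). i \<leftarrow> [0..<n], j \<leftarrow> [0..<n], i < j \<and> \<not> E i j]"

text \<open>Concrete model of G_Gamma via the normal form
  x_1^(a_1) ... x_n^(a_n) prod y_(i,j)^(c_(i,j)).  Using x_j x_i = x_i x_j y_(i,j) (i<j, non-adjacent),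
  x_j x_i = x_i x_j (adjacent), and centrality of the y's, one gets
  (a,c)(b,e) = (a+b, c+e+w(a,b)) with w(a,b)_(i,j) = a_j * b_i.\<close>
definition GGamma :: "nat \<Rightarrow> (nat \<Rightarrow> nat \<Rightarrow> bool) \<Rightarrow> ((nat \<Rightarrow> int) \<times> (nat \<times> nat \<Rightarrow> int)) monoid" where
  "GGamma n E = \<lparr>
     carrier = {(a, c). (\<forall>v. n \<le> v \<longrightarrow> a v = 0) \<and> (\<forall>p. p \<notin> nonadj n E \<longrightarrow> c p = 0)},
     monoid.mult = (\<lambda>(a, c) (b, e).
        (\<lambda>v. a v + b v,
         \<lambda>p. c p + e p + (if p \<in> nonadj n E then a (snd p) * b (fst p) else 0))),
     one = (\<lambda>_. 0, \<lambda>_. 0) \<rparr>"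

definition xgen :: "nat \<Rightarrow> (nat \<Rightarrow> int) \<times> (nat \<times> nat \<Rightarrow> int)" where
  "xgen v = ((\<lambda>u. if u = v then 1 else 0), (\<lambda>_. 0))"

definition ygen :: "nat \<times> nat \<Rightarrow> (nat \<Rightarrow> int) \<times> (nat \<times> nat \<Rightarrow> int)" where
  "ygen p = ((\<lambda>_. 0), (\<lambda>q. if q = p then 1 else 0))"

definition lprod :: "('a, 'b) monoid_scheme \<Rightarrow> 'a list \<Rightarrow> 'a" where
  "lprod G xs = foldr (\<lambda>g acc. g \<otimes>\<^bsub>G\<^esub> acc) xs \<one>\<^bsub>G\<^esub>"

definition centralizer :: "('a, 'b) monoid_scheme \<Rightarrow> 'a \<Rightarrow> 'a set" where
  "centralizer G g = {x \<in> carrier G. x \<otimes>\<^bsub>G\<^esub> g = g \<otimes>\<^bsub>G\<^esub> x}"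

end

theory Submission
  imports Defs
begin

definition W :: "nat \<Rightarrow> (nat \<Rightarrow> nat \<Rightarrow> bool) \<Rightarrow> (nat \<Rightarrow> int) \<Rightarrow> (nat \<Rightarrow> int) \<Rightarrow> (nat \<times> nat \<Rightarrow> int)" where
  "W n E a b = (\<lambda>p. if p \<in> nonadj n E then a (snd p) * b (fst p) else 0)"

lemma GG_mult: "(a, c) \<otimes>\<^bsub>GGamma n E\<^esub> (b, e) = (\<lambda>v. a v + b v, \<lambda>p. c p + e p + W n E a b p)"
  by (simp add: GGamma_def W_def)

lemma GG_carrier: "(a, c) \<in> carrier (GGamma n E) \<longleftrightarrow> (\<forall>v. n \<le> v \<longrightarrow> a v = 0) \<and> (\<forall>p. p \<notin> nonadj n E \<longrightarrow> c p = 0)"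
  by (simp add: GGamma_def)

lemma GG_one: "\<one>\<^bsub>GGamma n E\<^esub> = (\<lambda>_. 0, \<lambda>_. 0)"
  by (simp add: GGamma_def)

lemma W_add1: "W n E (\<lambda>v. a v + b v) c = (\<lambda>p. W n E a c p + W n E b c p)"
  by (auto simp: W_def fun_eq_iff algebra_simps)
lemma W_add2: "W n E c (\<lambda>v. a v + b v) = (\<lambda>p. W n E c a p + W n E c b p)"
  by (auto simp: W_def fun_eq_iff algebra_simps)
lemma W_neg1: "W n E (\<lambda>v. - a v) c = (\<lambda>p. - W n E a c p)"
  by (auto simp: W_def fun_eq_iff algebra_simps)
lemma W_zero1: "W n E (\<lambda>v. 0) c = (\<lambda>p. 0)" and W_zero2: "W n E c (\<lambda>v. 0) = (\<lambda>p. 0)"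
  by (auto simp: W_def fun_eq_iff)

lemma W_supp: "p \<notin> nonadj n E \<Longrightarrow> W n E a b p = 0"
  by (simp add: W_def)

lemma GG_group: "group (GGamma n E)"
proof (rule groupI)
  fix x y assume "x \<in> carrier (GGamma n E)" "y \<in> carrier (GGamma n E)"
  then show "x \<otimes>\<^bsub>GGamma n E\<^esub> y \<in> carrier (GGamma n E)"
    by (cases x; cases y) (auto simp: GG_mult GG_carrier W_supp)
next
  show "\<one>\<^bsub>GGamma n E\<^esub> \<in> carrier (GGamma n E)" by (simp add: GG_one GG_carrier)
next
  fix x y z assume "x \<in> carrier (GGamma n E)" "y \<in> carrier (GGamma n E)" "z \<in> carrier (GGamma n E)"
  then show "x \<otimes>\<^bsub>GGamma n E\<^esub> y \<otimes>\<^bsub>GGamma n E\<^esub> z = x \<otimes>\<^bsub>GGamma n E\<^esub> (y \<otimes>\<^bsub>GGamma n E\<^esub> z)"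
    by (cases x; cases y; cases z) (simp add: GG_mult W_add1 W_add2 algebra_simps)
next
  fix x assume "x \<in> carrier (GGamma n E)"
  then show "\<one>\<^bsub>GGamma n E\<^esub> \<otimes>\<^bsub>GGamma n E\<^esub> x = x"
    by (cases x) (simp add: GG_one GG_mult W_zero1)
next
  fix x assume x: "x \<in> carrier (GGamma n E)"
  obtain a c where xe: "x = (a, c)" by fastforce
  let ?y = "(\<lambda>v. - a v, \<lambda>p. - c p + W n E a a p)"
  have "?y \<in> carrier (GGamma n E)" using x xe by (auto simp: GG_carrier W_supp)
  moreover have "?y \<otimes>\<^bsub>GGamma n E\<^esub> x = \<one>\<^bsub>GGamma n E\<^esub>"
    by (simp add: xe GG_mult GG_one W_neg1)
  ultimately show "\<exists>y\<in>carrier (GGamma n E). y \<otimes>\<^bsub>GGamma n E\<^esub> x = \<one>\<^bsub>GGamma n E\<^esub>" by blast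
qed

lemma GG_inv:
  assumes "(a, c) \<in> carrier (GGamma n E)"
  shows "inv\<^bsub>GGamma n E\<^esub> (a, c) = (\<lambda>v. - a v, \<lambda>p. - c p + W n E a a p)"
proof (rule group.inv_equality[OF GG_group])
  show "(\<lambda>v. - a v, \<lambda>p. - c p + W n E a a p) \<otimes>\<^bsub>GGamma n E\<^esub> (a, c) = \<one>\<^bsub>GGamma n E\<^esub>"
    by (simp add: GG_mult GG_one W_neg1)
  show "(\<lambda>v. - a v, \<lambda>p. - c p + W n E a a p) \<in> carrier (GGamma n E)"
    using assms by (auto simp: GG_carrier W_supp)
qed (fact assms)

lemma W_smult1: "W n E (\<lambda>v. k * a v) b = (\<lambda>p. k * W n E a b p)"
  by (auto simp: W_def fun_eq_iff algebra_simps)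

lemma W_smult2: "W n E b (\<lambda>v. k * a v) = (\<lambda>p. k * W n E b a p)"
  by (auto simp: W_def fun_eq_iff algebra_simps)

lemma GG_nat_pow:
  assumes "(a, c) \<in> carrier (GGamma n E)" "W n E a a = (\<lambda>_. 0)"
  shows "(a, c) [^]\<^bsub>GGamma n E\<^esub> (k::nat) = (\<lambda>v. int k * a v, \<lambda>p. int k * c p)"
proof (induction k)
  case 0
  then show ?case by (simp add: GG_one)
next
  case (Suc k)
  then show ?case using assms(2) by (simp add: GG_mult W_smult1 algebra_simps)
qed

lemma GG_int_pow:
  assumes "(a, c) \<in> carrier (GGamma n E)" "W n E a a = (\<lambda>_. 0)"
  shows "(a, c) [^]\<^bsub>GGamma n E\<^esub> (k::int) = (\<lambda>v. k * a v, \<lambda>p. k * c p)"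
proof (cases "k < 0")
  case True
  have c: "(\<lambda>v. int (nat (-k)) * a v, \<lambda>p. int (nat (-k)) * c p) \<in> carrier (GGamma n E)"
    using assms(1) by (auto simp: GG_carrier)
  have w: "W n E (\<lambda>v. int (nat (-k)) * a v) (\<lambda>v. int (nat (-k)) * a v) = (\<lambda>_. 0)"
    using assms(2) by (simp add: W_smult1 W_smult2)
  have "(a, c) [^]\<^bsub>GGamma n E\<^esub> k = inv\<^bsub>GGamma n E\<^esub> ((a, c) [^]\<^bsub>GGamma n E\<^esub> nat (-k))"
    using True by (simp only: int_pow_def2 if_True)
  also have "\<dots> = inv\<^bsub>GGamma n E\<^esub> (\<lambda>v. int (nat (-k)) * a v, \<lambda>p. int (nat (-k)) * c p)"
    using GG_nat_pow[OF assms] by simp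
  also have "\<dots> = (\<lambda>v. k * a v, \<lambda>p. k * c p)"
    using GG_inv[OF c] w True by (simp add: fun_eq_iff)
  finally show ?thesis .
next
  case False
  then have "(a, c) [^]\<^bsub>GGamma n E\<^esub> k = (a, c) [^]\<^bsub>GGamma n E\<^esub> nat k"
    by (simp only: int_pow_def2 if_False)
  then show ?thesis using False GG_nat_pow[OF assms, of "nat k"] by simp
qed

lemma GG_nat_pow_fst:
  assumes "(a, c) \<in> carrier (GGamma n E)"
  shows "fst ((a, c) [^]\<^bsub>GGamma n E\<^esub> (k::nat)) = (\<lambda>v. int k * a v)"
proof (induction k)
  case 0
  then show ?case by (simp add: GG_one)
next
  case (Suc k)
  obtain a' c' where e: "(a, c) [^]\<^bsub>GGamma n E\<^esub> k = (a', c')" by fastforce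
  have "(a, c) [^]\<^bsub>GGamma n E\<^esub> Suc k = (a', c') \<otimes>\<^bsub>GGamma n E\<^esub> (a, c)"
    using e by simp
  then show ?case using Suc e by (simp add: GG_mult algebra_simps)
qed

lemma GG_int_pow_fst:
  assumes "x \<in> carrier (GGamma n E)"
  shows "fst (x [^]\<^bsub>GGamma n E\<^esub> (k::int)) = (\<lambda>v. k * fst x v)"
proof -
  obtain a c where xe: "x = (a, c)" by fastforce
  have ac: "(a, c) \<in> carrier (GGamma n E)" using assms xe by simp
  show ?thesis
  proof (cases "k < 0")
    case True
    have "(a, c) [^]\<^bsub>GGamma n E\<^esub> nat (-k) \<in> carrier (GGamma n E)"
      using ac by (rule monoid.nat_pow_closed[OF group.is_monoid[OF GG_group]])
    then obtain a' c' where e: "(a, c) [^]\<^bsub>GGamma n E\<^esub> nat (-k) = (a', c')" "(a', c') \<in> carrier (GGamma n E)"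
      by (metis surj_pair)
    have "a' = fst ((a, c) [^]\<^bsub>GGamma n E\<^esub> nat (-k))" using e(1) by simp
    also have "\<dots> = (\<lambda>v. int (nat (-k)) * a v)" by (rule GG_nat_pow_fst[OF ac])
    finally have a': "a' = (\<lambda>v. - k * a v)" using True by simp
    have "(a, c) [^]\<^bsub>GGamma n E\<^esub> k = inv\<^bsub>GGamma n E\<^esub> ((a, c) [^]\<^bsub>GGamma n E\<^esub> nat (-k))"
      using True by (simp only: int_pow_def2 if_True)
    also have "\<dots> = inv\<^bsub>GGamma n E\<^esub> (a', c')" using e(1) by simp
    also have "\<dots> = (\<lambda>v. - a' v, \<lambda>p. - c' p + W n E a' a' p)" by (rule GG_inv[OF e(2)])
    finally show ?thesis using xe a' by simp
  next
    case False
    then have "(a, c) [^]\<^bsub>GGamma n E\<^esub> k = (a, c) [^]\<^bsub>GGamma n E\<^esub> nat k"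
      by (simp only: int_pow_def2 if_False)
    then show ?thesis using False xe GG_nat_pow_fst[OF ac, of "nat k"] by simp
  qed
qed

lemma xgen_carrier: "v < n \<Longrightarrow> xgen v \<in> carrier (GGamma n E)"
  by (simp add: xgen_def GG_carrier)

lemma ygen_carrier: "p \<in> nonadj n E \<Longrightarrow> ygen p \<in> carrier (GGamma n E)"
  by (auto simp: ygen_def GG_carrier)

lemma xgen_pow: "v < n \<Longrightarrow> xgen v [^]\<^bsub>GGamma n E\<^esub> (k::int) = ((\<lambda>u. if u = v then k else 0), (\<lambda>_. 0))"
proof -
  assume v: "v < n"
  have "W n E (\<lambda>u. if u = v then 1 else 0) (\<lambda>u. if u = v then 1 else 0) = (\<lambda>_. 0)"
    by (auto simp: W_def nonadj_def fun_eq_iff)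
  then show ?thesis using GG_int_pow[of "\<lambda>u. if u = v then 1 else 0" "\<lambda>_. 0" n E k] xgen_carrier[OF v]
    by (simp add: xgen_def fun_eq_iff)
qed

lemma ygen_pow: "p \<in> nonadj n E \<Longrightarrow> ygen p [^]\<^bsub>GGamma n E\<^esub> (k::int) = ((\<lambda>_. 0), (\<lambda>q. if q = p then k else 0))"
proof -
  assume p: "p \<in> nonadj n E"
  show ?thesis using GG_int_pow[of "\<lambda>_. 0" "\<lambda>q. if q = p then 1 else 0" n E k] ygen_carrier[OF p]
    by (simp add: ygen_def fun_eq_iff W_zero1)
qed

lemma lprod_x:
  assumes "sorted_wrt (<) vs" "set vs \<subseteq> {..<n}"
  shows "lprod (GGamma n E) (map (\<lambda>v. xgen v [^]\<^bsub>GGamma n E\<^esub> (f v :: int)) vs)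
         = ((\<lambda>u. if u \<in> set vs then f u else 0), (\<lambda>_. 0))"
  using assms
proof (induction vs)
  case Nil
  then show ?case by (simp add: lprod_def GG_one)
next
  case (Cons v vs)
  have IH: "lprod (GGamma n E) (map (\<lambda>v. xgen v [^]\<^bsub>GGamma n E\<^esub> (f v :: int)) vs)
         = ((\<lambda>u. if u \<in> set vs then f u else 0), (\<lambda>_. 0))" using Cons by simp
  have lt: "\<And>u. u \<in> set vs \<Longrightarrow> v < u" using Cons.prems by simp
  have "W n E (\<lambda>u. if u = v then f v else 0) (\<lambda>u. if u \<in> set vs then f u else 0) = (\<lambda>_. 0)"
    using lt by (fastforce simp: W_def nonadj_def fun_eq_iff)
  moreover have "lprod (GGamma n E) (map (\<lambda>v. xgen v [^]\<^bsub>GGamma n E\<^esub> (f v :: int)) (v # vs))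
     = xgen v [^]\<^bsub>GGamma n E\<^esub> f v \<otimes>\<^bsub>GGamma n E\<^esub> lprod (GGamma n E) (map (\<lambda>v. xgen v [^]\<^bsub>GGamma n E\<^esub> (f v :: int)) vs)"
    by (simp add: lprod_def)
  ultimately show ?case using Cons.prems IH lt
    by (auto simp: xgen_pow GG_mult fun_eq_iff)
qed

lemma lprod_y:
  assumes "distinct ps" "set ps \<subseteq> nonadj n E"
  shows "lprod (GGamma n E) (map (\<lambda>p. ygen p [^]\<^bsub>GGamma n E\<^esub> (f p :: int)) ps)
         = ((\<lambda>_. 0), (\<lambda>q. if q \<in> set ps then f q else 0))"
  using assms
proof (induction ps)
  case Nil
  then show ?case by (simp add: lprod_def GG_one)
next
  case (Cons p ps)
  have IH: "lprod (GGamma n E) (map (\<lambda>p. ygen p [^]\<^bsub>GGamma n E\<^esub> (f p :: int)) ps)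
         = ((\<lambda>_. 0), (\<lambda>q. if q \<in> set ps then f q else 0))" using Cons by simp
  have "lprod (GGamma n E) (map (\<lambda>p. ygen p [^]\<^bsub>GGamma n E\<^esub> (f p :: int)) (p # ps))
     = ygen p [^]\<^bsub>GGamma n E\<^esub> f p \<otimes>\<^bsub>GGamma n E\<^esub> lprod (GGamma n E) (map (\<lambda>p. ygen p [^]\<^bsub>GGamma n E\<^esub> (f p :: int)) ps)"
    by (simp add: lprod_def)
  then show ?case using Cons.prems IH
    by (auto simp: ygen_pow GG_mult fun_eq_iff W_zero1)
qed

lemma set_nonadj_list: "set (nonadj_list n E) = nonadj n E"
  by (auto simp: nonadj_list_def nonadj_def)

lemma dist_aux: "distinct xs \<Longrightarrow> distinct (concat (map (\<lambda>j. if P j then [(m::nat, j)] else []) xs))"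
  by (induction xs) auto

lemma distinct_nonadj_list: "distinct (nonadj_list n E)"
proof -
  have "distinct [(i, j). i \<leftarrow> [0..<m], j \<leftarrow> [0..<n], i < j \<and> \<not> E i j]" for m
  proof (induction m)
    case 0 then show ?case by simp
  next
    case (Suc m)
    then show ?case by (auto simp: distinct_map inj_on_def dist_aux)
  qed
  then show ?thesis by (simp add: nonadj_list_def)
qed

lemma finite_nonadj: "finite (nonadj n E)"
proof -
  have "nonadj n E \<subseteq> {..<n} \<times> {..<n}" by (auto simp: nonadj_def)
  then show ?thesis by (rule finite_subset) auto
qed

lemma GG_fst_mult: "fst (x \<otimes>\<^bsub>GGamma n E\<^esub> y) = (\<lambda>v. fst x v + fst y v)"
  by (cases x; cases y) (simp add: GG_mult)

lemma GG_fst_inv: "x \<in> carrier (GGamma n E) \<Longrightarrow> fst (inv\<^bsub>GGamma n E\<^esub> x) = (\<lambda>v. - fst x v)"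
  by (cases x) (simp add: GG_inv)

lemma GG_fst_one: "fst \<one>\<^bsub>GGamma n E\<^esub> = (\<lambda>_. 0)"
  by (simp add: GG_one)

definition D0 :: "nat \<Rightarrow> (nat \<Rightarrow> nat \<Rightarrow> bool) \<Rightarrow> ((nat \<Rightarrow> int) \<times> (nat \<times> nat \<Rightarrow> int)) set" where
  "D0 n E = {x \<in> carrier (GGamma n E). fst x = (\<lambda>_. 0)}"

lemma D0_subgroup: "subgroup (D0 n E) (GGamma n E)"
proof (rule group.subgroupI[OF GG_group])
  show "D0 n E \<subseteq> carrier (GGamma n E)" by (auto simp: D0_def)
  have "((\<lambda>_. 0), (\<lambda>_. 0)) \<in> D0 n E" by (simp add: D0_def GG_carrier)
  then show "D0 n E \<noteq> {}" by blast
  show "inv\<^bsub>GGamma n E\<^esub> a \<in> D0 n E" if "a \<in> D0 n E" for a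
    using that by (auto simp: D0_def GG_fst_inv group.inv_closed[OF GG_group])
  show "a \<otimes>\<^bsub>GGamma n E\<^esub> b \<in> D0 n E" if "a \<in> D0 n E" "b \<in> D0 n E" for a b
    using that by (auto simp: D0_def GG_fst_mult monoid.m_closed[OF group.is_monoid[OF GG_group]])
qed

lemma single_comm:
  assumes p: "(i, j) \<in> nonadj n E"
  shows "((\<lambda>_. 0), (\<lambda>q. if q = (i, j) then m else 0)) \<in> derived_set (GGamma n E) (carrier (GGamma n E))"
proof -
  let ?G = "GGamma n E"
  have ij: "i < j" "j < n" using p by (auto simp: nonadj_def)
  define XX where "XX = ((\<lambda>u. if u = j then m else 0) :: nat \<Rightarrow> int, (\<lambda>_. 0) :: nat \<times> nat \<Rightarrow> int)"
  define YY where "YY = ((\<lambda>u. if u = i then 1 else 0) :: nat \<Rightarrow> int, (\<lambda>_. 0) :: nat \<times> nat \<Rightarrow> int)"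
  have XX: "XX \<in> carrier ?G" and YY: "YY \<in> carrier ?G" using ij by (auto simp: XX_def YY_def GG_carrier)
  have iX: "inv\<^bsub>?G\<^esub> XX = ((\<lambda>u. if u = j then - m else 0), (\<lambda>_. 0))"
    using XX unfolding XX_def by (subst GG_inv) (auto simp: W_def nonadj_def fun_eq_iff)
  have iY: "inv\<^bsub>?G\<^esub> YY = ((\<lambda>u. if u = i then - 1 else 0), (\<lambda>_. 0))"
    using YY unfolding YY_def by (subst GG_inv) (auto simp: W_def nonadj_def fun_eq_iff)
  have "XX \<otimes>\<^bsub>?G\<^esub> YY \<otimes>\<^bsub>?G\<^esub> inv\<^bsub>?G\<^esub> XX \<otimes>\<^bsub>?G\<^esub> inv\<^bsub>?G\<^esub> YY
        = ((\<lambda>_. 0), (\<lambda>q. if q = (i, j) then m else 0))"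
    unfolding iX iY unfolding XX_def YY_def using ij p
    by (auto simp: GG_mult W_def nonadj_def fun_eq_iff)
  then show ?thesis using XX YY by blast
qed

lemma derived_GG: "derived (GGamma n E) (carrier (GGamma n E)) = D0 n E"
proof
  let ?G = "GGamma n E"
  interpret grp: group ?G by (rule GG_group)
  show "derived ?G (carrier ?G) \<subseteq> D0 n E"
    unfolding derived_def
  proof (rule grp.generate_subgroup_incl[OF _ D0_subgroup])
    show "derived_set ?G (carrier ?G) \<subseteq> D0 n E"
      by (auto simp: D0_def GG_fst_mult GG_fst_inv)
  qed
  have sub: "subgroup (derived ?G (carrier ?G)) ?G"
    unfolding derived_def by (rule grp.generate_is_subgroup) auto
  have main: "\<forall>e. (\<forall>q. q \<notin> S \<longrightarrow> e q = 0) \<longrightarrow> ((\<lambda>_. 0), e) \<in> derived ?G (carrier ?G)"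
    if "finite S" "S \<subseteq> nonadj n E" for S
    using that
  proof (induction S rule: finite_induct)
    case empty
    have "((\<lambda>_. 0), (\<lambda>_. 0)) \<in> derived ?G (carrier ?G)"
      using subgroup.one_closed[OF sub] by (simp add: GG_one)
    show ?case
    proof (intro allI impI)
      fix e :: "nat \<times> nat \<Rightarrow> int"
      assume "\<forall>q. q \<notin> {} \<longrightarrow> e q = 0"
      then have "e = (\<lambda>_. 0)" by auto
      then show "((\<lambda>_. 0), e) \<in> derived ?G (carrier ?G)" using \<open>((\<lambda>_. 0), (\<lambda>_. 0)) \<in> derived ?G (carrier ?G)\<close> by simp
    qed
  next
    case (insert p S)
    show ?case
    proof (intro allI impI)
      fix e :: "nat \<times> nat \<Rightarrow> int"
      assume e: "\<forall>q. q \<notin> insert p S \<longrightarrow> e q = 0"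
      have a: "((\<lambda>_. 0), e(p := 0)) \<in> derived ?G (carrier ?G)"
        using insert e by auto
      obtain i j where p: "p = (i, j)" by fastforce
      have b: "((\<lambda>_. 0), (\<lambda>q. if q = (i, j) then e p else 0)) \<in> derived ?G (carrier ?G)"
        using single_comm[of i j n E "e p"] insert p unfolding derived_def
        by (auto intro: generate.incl)
      have "((\<lambda>_. 0), e(p := 0)) \<otimes>\<^bsub>?G\<^esub> ((\<lambda>_. 0), (\<lambda>q. if q = (i, j) then e p else 0)) = ((\<lambda>_. 0), e)"
        by (auto simp: GG_mult W_zero1 p fun_eq_iff)
      then show "((\<lambda>_. 0), e) \<in> derived ?G (carrier ?G)"
        using subgroup.m_closed[OF sub a b] by simp
    qed
  qed
  show "D0 n E \<subseteq> derived ?G (carrier ?G)"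
  proof
    fix x assume x: "x \<in> D0 n E"
    obtain a e where xe: "x = (a, e)" by fastforce
    have "a = (\<lambda>_. 0)" "\<forall>q. q \<notin> nonadj n E \<longrightarrow> e q = 0" using x xe by (auto simp: D0_def GG_carrier)
    then show "x \<in> derived ?G (carrier ?G)"
      using main[OF finite_nonadj order_refl] xe by simp
  qed
qed

lemma ratio_lemma:
  fixes b z :: "nat \<Rightarrow> int"
  assumes cross: "\<And>u v. u < n \<Longrightarrow> v < n \<Longrightarrow> b u * z v = b v * z u"
    and v1: "v1 < n" "z v1 \<noteq> 0"
  shows "\<exists>\<mu>. \<forall>u<n. b u = \<mu> * (z u div Gcd (z ` {..<n}))"
proof -
  define d where "d = Gcd (z ` {..<n})"
  have dvd: "d dvd z u" if "u < n" for u using that unfolding d_def by (simp add: Gcd_dvd)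
  have "Gcd ((*) (b v1) ` (z ` {..<n})) = normalize (b v1 * d)" unfolding d_def by (rule Gcd_mult)
  moreover have "z v1 dvd Gcd ((*) (b v1) ` (z ` {..<n}))"
  proof (rule Gcd_greatest)
    fix x assume "x \<in> (*) (b v1) ` (z ` {..<n})"
    then obtain u where u: "u < n" "x = b v1 * z u" by auto
    then have "x = b u * z v1" using cross[OF u(1) v1(1)] by simp
    then show "z v1 dvd x" by simp
  qed
  ultimately have "z v1 dvd b v1 * d" by simp
  then obtain \<mu> where mu: "b v1 * d = z v1 * \<mu>" by (auto elim: dvdE)
  have "b u = \<mu> * (z u div d)" if u: "u < n" for u
  proof -
    have zu: "z u = d * (z u div d)" using dvd[OF u] by simp
    have "b u * z v1 = b v1 * z u" using cross[OF u v1(1)] .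
    also have "\<dots> = b v1 * d * (z u div d)" using zu by (metis mult.assoc)
    also have "\<dots> = (\<mu> * (z u div d)) * z v1" using mu by (simp add: algebra_simps)
    finally show ?thesis using v1(2) by simp
  qed
  then show ?thesis unfolding d_def by blast
qed

lemma cross_lemma:
  fixes b z :: "nat \<Rightarrow> int" and cp :: "nat \<Rightarrow> nat"
  assumes sym: "\<And>u v. E u v \<Longrightarrow> E v u"
    and disj_union: "\<And>u v. u < n \<Longrightarrow> v < n \<Longrightarrow> E u v \<Longrightarrow> cp u = cp v"
    and two: "v1 < n" "v2 < n" "cp v1 \<noteq> cp v2" "z v1 \<noteq> 0" "z v2 \<noteq> 0"
    and P: "\<And>i j. i < j \<Longrightarrow> j < n \<Longrightarrow> \<not> E i j \<Longrightarrow> b j * z i = z j * b i"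
  shows "\<And>u v. u < n \<Longrightarrow> v < n \<Longrightarrow> b u * z v = b v * z u"
proof -
  have P': "b j * z i = z j * b i" if "i < n" "j < n" "i \<noteq> j" "\<not> E i j" for i j
  proof (cases "i < j")
    case True then show ?thesis using P that by blast
  next
    case False
    then have "j < i" using that by simp
    moreover have "\<not> E j i" using that sym by blast
    ultimately have "b i * z j = z i * b j" using P that by blast
    then show ?thesis by (simp add: algebra_simps)
  qed
  fix u v assume u: "u < n" and v: "v < n"
  show "b u * z v = b v * z u"
  proof (cases "u = v")
    case True then show ?thesis by simp
  next
    case uv: False
    show ?thesis
    proof (cases "E u v")
      case False
      then show ?thesis using P'[OF u v uv] by (simp add: algebra_simps)
    next
      case True
      then have cuv: "cp u = cp v" using disj_union u v by blast
      obtain w where w: "w < n" "cp w \<noteq> cp u" "z w \<noteq> 0"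
        using two by (cases "cp v1 = cp u") auto
      have "w \<noteq> u" "w \<noteq> v" using w cuv by auto
      moreover have "\<not> E u w" "\<not> E v w" using w cuv disj_union u v by auto
      ultimately have e1: "b w * z u = z w * b u" and e2: "b w * z v = z w * b v"
        using P'[OF u w(1)] P'[OF v w(1)] by auto
      have "z w * (b u * z v) = z w * (b v * z u)"
      proof -
        have "z w * (b u * z v) = (z w * b u) * z v" by (simp add: algebra_simps)
        also have "\<dots> = b w * z u * z v" using e1 by simp
        also have "\<dots> = (b w * z v) * z u" by (simp add: algebra_simps)
        also have "\<dots> = z w * (b v * z u)" using e2 by (simp add: algebra_simps)
        finally show ?thesis .
      qed
      then show ?thesis using w(3) by simp
    qed
  qed
qed

lemma cent_char:
  fixes z :: "nat \<Rightarrow> int" and cp :: "nat \<Rightarrow> nat"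
  assumes sym: "\<And>u v. E u v \<Longrightarrow> E v u"
    and disj_union: "\<And>u v. u < n \<Longrightarrow> v < n \<Longrightarrow> E u v \<Longrightarrow> cp u = cp v"
    and two: "v1 < n" "v2 < n" "cp v1 \<noteq> cp v2" "z v1 \<noteq> 0" "z v2 \<noteq> 0"
    and az: "az = (\<lambda>u. if u < n then z u else 0)"
    and a0: "a0 = (\<lambda>u. if u < n then z u div Gcd (z ` {..<n}) else 0)"
  shows "centralizer (GGamma n E) (az, tz) = {x \<in> carrier (GGamma n E). \<exists>\<mu>. fst x = (\<lambda>u. \<mu> * a0 u)}"
proof -
  define d where "d = Gcd (z ` {..<n})"
  have dvd: "d dvd z u" if "u < n" for u using that unfolding d_def by (simp add: Gcd_dvd)
  have comm_iff: "x \<otimes>\<^bsub>GGamma n E\<^esub> (az, tz) = (az, tz) \<otimes>\<^bsub>GGamma n E\<^esub> x \<longleftrightarrow>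
      (\<forall>i j. i < j \<longrightarrow> j < n \<longrightarrow> \<not> E i j \<longrightarrow> fst x j * z i = z j * fst x i)" for x
  proof -
    obtain b e where xe: "x = (b, e)" by fastforce
    have "x \<otimes>\<^bsub>GGamma n E\<^esub> (az, tz) = (az, tz) \<otimes>\<^bsub>GGamma n E\<^esub> x \<longleftrightarrow> W n E b az = W n E az b"
      by (simp add: xe GG_mult fun_eq_iff algebra_simps)
    also have "\<dots> \<longleftrightarrow> (\<forall>i j. i < j \<longrightarrow> j < n \<longrightarrow> \<not> E i j \<longrightarrow> b j * z i = z j * b i)"
      by (auto simp: W_def fun_eq_iff nonadj_def az algebra_simps)
    finally show ?thesis by (simp add: xe)
  qed
  show ?thesis
  proof (intro equalityI subsetI)
    fix x assume x: "x \<in> centralizer (GGamma n E) (az, tz)"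
    obtain b e where xe: "x = (b, e)" by fastforce
    have xc: "x \<in> carrier (GGamma n E)" using x by (simp add: centralizer_def)
    have P: "\<And>i j. i < j \<Longrightarrow> j < n \<Longrightarrow> \<not> E i j \<Longrightarrow> b j * z i = z j * b i"
      using x comm_iff[of x] xe by (simp add: centralizer_def)
    have cross: "\<And>u v. u < n \<Longrightarrow> v < n \<Longrightarrow> b u * z v = b v * z u"
      by (rule cross_lemma[OF sym disj_union two P]) auto
    obtain \<mu> where mu: "\<forall>u<n. b u = \<mu> * (z u div Gcd (z ` {..<n}))"
      using ratio_lemma[of n b z, OF cross two(1) two(4)] by blast
    have "b = (\<lambda>u. \<mu> * a0 u)"
    proof
      fix u show "b u = \<mu> * a0 u"
      proof (cases "u < n")
        case True then show ?thesis using mu a0 by simp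
      next
        case False then show ?thesis using xc xe a0 by (simp add: GG_carrier)
      qed
    qed
    then show "x \<in> {x \<in> carrier (GGamma n E). \<exists>\<mu>. fst x = (\<lambda>u. \<mu> * a0 u)}" using xc xe by auto
  next
    fix x assume x: "x \<in> {x \<in> carrier (GGamma n E). \<exists>\<mu>. fst x = (\<lambda>u. \<mu> * a0 u)}"
    then obtain \<mu> where xc: "x \<in> carrier (GGamma n E)" and mu: "fst x = (\<lambda>u. \<mu> * a0 u)" by blast
    have "fst x j * z i = z j * fst x i" if "i < j" "j < n" for i j
    proof -
      have "i < n" using that by simp
      then have zi: "z i = d * (z i div d)" and zj: "z j = d * (z j div d)" using dvd that by auto
      have "fst x j * z i = \<mu> * (z j div d) * (d * (z i div d))" using mu a0 that zi \<open>i < n\<close> by (simp add: d_def)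
      also have "\<dots> = (d * (z j div d)) * (\<mu> * (z i div d))" by (simp add: algebra_simps)
      also have "\<dots> = z j * fst x i" using mu a0 that zj \<open>i < n\<close> by (simp add: d_def)
      finally show ?thesis .
    qed
    then show "x \<in> centralizer (GGamma n E) (az, tz)"
      using xc comm_iff[of x] by (simp add: centralizer_def)
  qed
qed

lemma GG_mult_y: "(A, s) \<otimes>\<^bsub>GGamma n E\<^esub> ((\<lambda>_. 0), e) = (A, \<lambda>p. s p + e p)"
  by (simp add: GG_mult W_zero2)

lemma comm_aux:
  "(A, s) \<otimes>\<^bsub>GGamma n E\<^esub> (A', s') \<otimes>\<^bsub>GGamma n E\<^esub> ((\<lambda>_. 0), (\<lambda>p. e p + e' p))
   = ((A, s) \<otimes>\<^bsub>GGamma n E\<^esub> ((\<lambda>_. 0), e)) \<otimes>\<^bsub>GGamma n E\<^esub> ((A', s') \<otimes>\<^bsub>GGamma n E\<^esub> ((\<lambda>_. 0), e'))"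
  by (simp add: GG_mult W_zero1 W_zero2 fun_eq_iff algebra_simps)

lemma parts:
  assumes hc: "(a0, (\<lambda>_. 0)) \<in> carrier (GGamma n E)" and nz: "a0 v1 \<noteq> 0"
    and C: "C = {x \<in> carrier (GGamma n E). \<exists>\<mu>. fst x = (\<lambda>u. \<mu> * a0 u)}"
  shows "C = generate (GGamma n E) {(a0, (\<lambda>_. 0))} <#>\<^bsub>GGamma n E\<^esub> D0 n E"
    and "generate (GGamma n E) {(a0, (\<lambda>_. 0))} \<inter> D0 n E = {\<one>\<^bsub>GGamma n E\<^esub>}"
    and "subgroup_generated (GGamma n E) C \<cong> product_group {..<card (nonadj n E)+1} (\<lambda>_. integer_group)"
proof -
  let ?G = "GGamma n E"
  let ?h = "(a0, (\<lambda>_. 0)) :: (nat \<Rightarrow> int) \<times> (nat \<times> nat \<Rightarrow> int)"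
  interpret grp: group ?G by (rule GG_group)
  have gen: "generate ?G {?h} = {?h [^]\<^bsub>?G\<^esub> k | k. k \<in> (UNIV :: int set)}"
    by (rule grp.generate_pow[OF hc])
  have hf: "fst (?h [^]\<^bsub>?G\<^esub> (k::int)) = (\<lambda>u. k * a0 u)" for k
    using GG_int_pow_fst[OF hc, of k] by simp
  have uniq: "k = k'" if "(\<lambda>u. k * a0 u) = (\<lambda>u. (k'::int) * a0 u)" for k k'
  proof -
    have "k * a0 v1 = k' * a0 v1" using that by meson
    then show ?thesis using nz by simp
  qed
  have decomp: "?h [^]\<^bsub>?G\<^esub> \<mu> \<otimes>\<^bsub>?G\<^esub> (inv\<^bsub>?G\<^esub> (?h [^]\<^bsub>?G\<^esub> \<mu>) \<otimes>\<^bsub>?G\<^esub> x) = x"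
    and decD: "inv\<^bsub>?G\<^esub> (?h [^]\<^bsub>?G\<^esub> \<mu>) \<otimes>\<^bsub>?G\<^esub> x \<in> D0 n E"
    if "x \<in> carrier ?G" "fst x = (\<lambda>u. \<mu> * a0 u)" for x \<mu>
  proof -
    have hp: "?h [^]\<^bsub>?G\<^esub> (\<mu>::int) \<in> carrier ?G" using hc by simp
    show "?h [^]\<^bsub>?G\<^esub> \<mu> \<otimes>\<^bsub>?G\<^esub> (inv\<^bsub>?G\<^esub> (?h [^]\<^bsub>?G\<^esub> \<mu>) \<otimes>\<^bsub>?G\<^esub> x) = x"
      using hp that(1) by (simp add: grp.m_assoc[symmetric])
    show "inv\<^bsub>?G\<^esub> (?h [^]\<^bsub>?G\<^esub> \<mu>) \<otimes>\<^bsub>?G\<^esub> x \<in> D0 n E"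
      using hp that by (simp add: D0_def GG_fst_mult GG_fst_inv hf)
  qed
  have Csub: "subgroup C ?G"
  proof (rule grp.subgroupI)
    show "C \<subseteq> carrier ?G" using C by blast
    have "\<one>\<^bsub>?G\<^esub> \<in> C" using C by (auto simp: GG_one GG_carrier intro!: exI[of _ 0])
    then show "C \<noteq> {}" by blast
    show "inv\<^bsub>?G\<^esub> a \<in> C" if aC: "a \<in> C" for a
    proof -
      obtain \<mu> where "a \<in> carrier ?G" "fst a = (\<lambda>u. \<mu> * a0 u)" using aC C by blast
      then show ?thesis using C by (auto simp: GG_fst_inv intro!: exI[of _ "- \<mu>"])
    qed
    show "a \<otimes>\<^bsub>?G\<^esub> b \<in> C" if abC: "a \<in> C" "b \<in> C" for a b
    proof -
      obtain \<mu> \<nu> where "a \<in> carrier ?G" "fst a = (\<lambda>u. \<mu> * a0 u)" "b \<in> carrier ?G" "fst b = (\<lambda>u. \<nu> * a0 u)"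
        using abC C by blast
      then show ?thesis using C by (auto simp: GG_fst_mult algebra_simps intro!: exI[of _ "\<mu> + \<nu>"])
    qed
  qed
  show P1: "C = generate ?G {?h} <#>\<^bsub>?G\<^esub> D0 n E"
  proof (intro equalityI subsetI)
    fix x assume "x \<in> C"
    then obtain \<mu> where x: "x \<in> carrier ?G" "fst x = (\<lambda>u. \<mu> * a0 u)" using C by blast
    show "x \<in> generate ?G {?h} <#>\<^bsub>?G\<^esub> D0 n E"
      unfolding set_mult_def gen using decomp[OF x] decD[OF x] by blast
  next
    fix x assume "x \<in> generate ?G {?h} <#>\<^bsub>?G\<^esub> D0 n E"
    then obtain k y where x: "x = ?h [^]\<^bsub>?G\<^esub> (k::int) \<otimes>\<^bsub>?G\<^esub> y" and y: "y \<in> D0 n E"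
      unfolding set_mult_def gen by blast
    have "x \<in> carrier ?G" using x y hc by (auto simp: D0_def)
    moreover have "fst x = (\<lambda>u. k * a0 u)" using x y by (simp add: GG_fst_mult hf D0_def)
    ultimately show "x \<in> C" using C by blast
  qed
  show "generate ?G {?h} \<inter> D0 n E = {\<one>\<^bsub>?G\<^esub>}"
  proof (intro equalityI subsetI)
    fix x assume "x \<in> generate ?G {?h} \<inter> D0 n E"
    then obtain k where x: "x = ?h [^]\<^bsub>?G\<^esub> (k::int)" "fst x = (\<lambda>_. 0)"
      unfolding gen D0_def by blast
    then have "(\<lambda>u. k * a0 u) = (\<lambda>u. 0 * a0 u)" using hf by simp
    then have "k = 0" by (rule uniq)
    then show "x \<in> {\<one>\<^bsub>?G\<^esub>}" using x by simp
  next
    fix x assume "x \<in> {\<one>\<^bsub>?G\<^esub>}"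
    then have x: "x = \<one>\<^bsub>?G\<^esub>" by simp
    have "x \<in> generate ?G {?h}" using x generate.one by blast
    moreover have "x \<in> D0 n E" using x by (simp add: D0_def GG_one GG_carrier)
    ultimately show "x \<in> generate ?G {?h} \<inter> D0 n E" by blast
  qed
  define N where "N = card (nonadj n E)"
  obtain f where bij: "bij_betw f {0..<N} (nonadj n E)"
    using ex_bij_betw_nat_finite[OF finite_nonadj] unfolding N_def by blast
  define f' where "f' = inv_into {0..<N} f"
  have f'1: "f' q < N" "f (f' q) = q" if "q \<in> nonadj n E" for q
    using that bij bij_betw_inv_into_right[OF bij] bij_betwE[OF bij_betw_inv_into[OF bij]]
    unfolding f'_def by auto
  have f'2: "f i \<in> nonadj n E" "f' (f i) = i" if "i < N" for i
    using that bij bij_betw_inv_into_left[OF bij] bij_betwE[OF bij] unfolding f'_def by auto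
  define P where "P = product_group {..<N+1} (\<lambda>_. integer_group)"
  define S where "S = subgroup_generated ?G C"
  have carS: "carrier S = C" unfolding S_def by (rule subgroup.carrier_subgroup_generated_subgroup[OF Csub])
  have carP: "carrier P = (\<Pi>\<^sub>E i\<in>{..<N+1}. UNIV)" by (simp add: P_def integer_group_def)
  have multP: "F \<otimes>\<^bsub>P\<^esub> F' = (\<lambda>i\<in>{..<N+1}. F i + F' i)" for F F'
    by (simp add: P_def integer_group_def)
  define Y where "Y F = ((\<lambda>_. 0) :: nat \<Rightarrow> int, (\<lambda>q. if q \<in> nonadj n E then F (f' q) else (0::int)))" for F
  define psi where "psi F = ?h [^]\<^bsub>?G\<^esub> (F N) \<otimes>\<^bsub>?G\<^esub> Y F" for F
  have Yc: "Y F \<in> carrier ?G" for F by (simp add: Y_def GG_carrier)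
  have psiC: "psi F \<in> C" for F
  proof -
    have "psi F \<in> carrier ?G" unfolding psi_def using Yc hc by simp
    moreover have "fst (psi F) = (\<lambda>u. F N * a0 u)" unfolding psi_def by (simp add: GG_fst_mult hf Y_def)
    ultimately show ?thesis using C by blast
  qed
  have hom: "psi \<in> hom P S"
  proof (rule homI)
    fix F assume "F \<in> carrier P" then show "psi F \<in> carrier S" using psiC carS by simp
  next
    fix F F' assume F: "F \<in> carrier P" and F': "F' \<in> carrier P"
    have NN: "(F \<otimes>\<^bsub>P\<^esub> F') N = F N + F' N" by (simp add: multP)
    have YY: "Y (F \<otimes>\<^bsub>P\<^esub> F') = ((\<lambda>_. 0), (\<lambda>p. snd (Y F) p + snd (Y F') p))"
      by (auto simp: Y_def multP fun_eq_iff) (metis f'1(1) less_SucI)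
    obtain A s where hs: "?h [^]\<^bsub>?G\<^esub> (F N) = (A, s)" by fastforce
    obtain A' s' where hs': "?h [^]\<^bsub>?G\<^esub> (F' N) = (A', s')" by fastforce
    have "psi (F \<otimes>\<^bsub>P\<^esub> F') = ?h [^]\<^bsub>?G\<^esub> (F N) \<otimes>\<^bsub>?G\<^esub> ?h [^]\<^bsub>?G\<^esub> (F' N) \<otimes>\<^bsub>?G\<^esub> Y (F \<otimes>\<^bsub>P\<^esub> F')"
      unfolding psi_def NN using hc by (simp add: grp.int_pow_mult)
    also have "\<dots> = psi F \<otimes>\<^bsub>?G\<^esub> psi F'"
      unfolding psi_def hs hs' YY by (simp add: Y_def comm_aux)
    finally show "psi (F \<otimes>\<^bsub>P\<^esub> F') = psi F \<otimes>\<^bsub>S\<^esub> psi F'" by (simp add: S_def)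
  qed
  have inj: "inj_on psi (carrier P)"
  proof (rule inj_onI)
    fix F F' assume F: "F \<in> carrier P" and F': "F' \<in> carrier P" and eq: "psi F = psi F'"
    have "(\<lambda>u. F N * a0 u) = (\<lambda>u. F' N * a0 u)"
      using arg_cong[OF eq, of fst] unfolding psi_def by (simp add: GG_fst_mult hf Y_def)
    then have FN: "F N = F' N" by (rule uniq)
    obtain A s where hs: "?h [^]\<^bsub>?G\<^esub> (F N) = (A, s)" by fastforce
    have "snd (Y F) = snd (Y F')"
      using eq unfolding psi_def FN[symmetric] hs by (simp add: Y_def GG_mult_y fun_eq_iff)
    then have YE: "\<And>q. q \<in> nonadj n E \<Longrightarrow> F (f' q) = F' (f' q)"
      unfolding Y_def fun_eq_iff snd_conv by (metis (full_types))
    show "F = F'"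
    proof (rule PiE_ext)
      show "F \<in> (\<Pi>\<^sub>E i\<in>{..<N+1}. UNIV)" "F' \<in> (\<Pi>\<^sub>E i\<in>{..<N+1}. UNIV)" using F F' carP by auto
      fix i assume "i \<in> {..<N+1}"
      then have "i < N \<or> i = N" by auto
      then show "F i = F' i"
      proof
        assume i: "i < N"
        show ?thesis using YE[OF f'2(1)[OF i]] f'2(2)[OF i] by simp
      qed (use FN in simp)
    qed
  qed
  have surj: "psi ` carrier P = carrier S"
  proof (intro equalityI subsetI)
    fix x assume "x \<in> psi ` carrier P" then show "x \<in> carrier S" using psiC carS by auto
  next
    fix x assume "x \<in> carrier S"
    then have "x \<in> C" using carS by simp
    then obtain \<mu> where x: "x \<in> carrier ?G" "fst x = (\<lambda>u. \<mu> * a0 u)" using C by blast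
    define y where "y = inv\<^bsub>?G\<^esub> (?h [^]\<^bsub>?G\<^esub> \<mu>) \<otimes>\<^bsub>?G\<^esub> x"
    have yD: "y \<in> D0 n E" using decD[OF x] unfolding y_def .
    obtain e where ye: "y = ((\<lambda>_. 0), e)" "\<forall>q. q \<notin> nonadj n E \<longrightarrow> e q = 0"
      using yD by (cases y) (auto simp: D0_def GG_carrier)
    define F where "F = (\<lambda>i\<in>{..<N+1}. if i = N then \<mu> else e (f i))"
    have FP: "F \<in> carrier P" by (simp add: carP F_def)
    have "Y F = y"
      using ye f'1 by (auto simp: Y_def F_def fun_eq_iff) (metis less_SucI)
    then have "psi F = x" unfolding psi_def using decomp[OF x] by (simp add: F_def y_def)
    then show "x \<in> psi ` carrier P" using FP by blast
  qed
  have "psi \<in> iso P S" using hom surj inj by (simp add: iso_iff)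
  then have "P \<cong> S" by (rule is_isoI)
  moreover have "group P" unfolding P_def by simp
  ultimately have "S \<cong> P" by (simp add: group.iso_sym)
  then show "subgroup_generated ?G C \<cong> product_group {..<card (nonadj n E)+1} (\<lambda>_. integer_group)"
    by (simp add: S_def P_def N_def)
qed

theorem lemma6p1:
  fixes n k :: nat and E :: "nat \<Rightarrow> nat \<Rightarrow> bool" and comp :: "nat \<Rightarrow> nat"
    and z :: "nat \<Rightarrow> int" and t :: "nat \<times> nat \<Rightarrow> int"
  assumes sym: "\<And>u v. E u v \<Longrightarrow> E v u"
    and irrefl: "\<And>v. \<not> E v v"
    and comp_range: "\<And>v. v < n \<Longrightarrow> comp v \<in> {1..k}"
    and disj_union: "\<And>u v. u < n \<Longrightarrow> v < n \<Longrightarrow> E u v \<Longrightarrow> comp u = comp v"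
    and two_comps: "\<exists>v1 v2. v1 < n \<and> v2 < n \<and> comp v1 \<noteq> comp v2 \<and> z v1 \<noteq> 0 \<and> z v2 \<noteq> 0"
  shows
    "let G = GGamma n E;
         g = lprod G (map (\<lambda>v. xgen v [^]\<^bsub>G\<^esub> z v) [0..<n])
             \<otimes>\<^bsub>G\<^esub> lprod G (map (\<lambda>p. ygen p [^]\<^bsub>G\<^esub> t p) (nonadj_list n E));
         d = Gcd (z ` {..<n});
         h = lprod G (map (\<lambda>v. xgen v [^]\<^bsub>G\<^esub> (z v div d)) [0..<n]);
         N = card (nonadj n E)
     in centralizer G g = generate G {h} <#>\<^bsub>G\<^esub> derived G (carrier G)
        \<and> generate G {h} \<inter> derived G (carrier G) = {\<one>\<^bsub>G\<^esub>}
        \<and> subgroup_generated G (centralizer G g) \<cong> product_group {..<N+1} (\<lambda>_. integer_group)"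
proof -
  obtain v1 v2 where two: "v1 < n" "v2 < n" "comp v1 \<noteq> comp v2" "z v1 \<noteq> 0" "z v2 \<noteq> 0"
    using two_comps by blast
  define d where "d = Gcd (z ` {..<n})"
  define az where "az = (\<lambda>u. if u < n then z u else (0::int))"
  define tz where "tz = (\<lambda>q. if q \<in> nonadj n E then t q else (0::int))"
  define a0 where "a0 = (\<lambda>u. if u < n then z u div d else (0::int))"
  have xs: "lprod (GGamma n E) (map (\<lambda>v. xgen v [^]\<^bsub>GGamma n E\<^esub> z v) [0..<n]) = (az, (\<lambda>_. 0))"
    using lprod_x[of "[0..<n]" n E z] by (simp add: az_def atLeast0LessThan)
  have ys: "lprod (GGamma n E) (map (\<lambda>p. ygen p [^]\<^bsub>GGamma n E\<^esub> t p) (nonadj_list n E)) = ((\<lambda>_. 0), tz)"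
    using lprod_y[of "nonadj_list n E" n E t] distinct_nonadj_list[of n E]
    by (simp add: tz_def set_nonadj_list)
  have g: "lprod (GGamma n E) (map (\<lambda>v. xgen v [^]\<^bsub>GGamma n E\<^esub> z v) [0..<n])
             \<otimes>\<^bsub>GGamma n E\<^esub> lprod (GGamma n E) (map (\<lambda>p. ygen p [^]\<^bsub>GGamma n E\<^esub> t p) (nonadj_list n E))
           = (az, tz)"
    unfolding xs ys GG_mult_y by simp
  have h: "lprod (GGamma n E) (map (\<lambda>v. xgen v [^]\<^bsub>GGamma n E\<^esub> (z v div d)) [0..<n]) = (a0, (\<lambda>_. 0))"
    using lprod_x[of "[0..<n]" n E "\<lambda>v. z v div d"] by (simp add: a0_def atLeast0LessThan)
  have hc: "(a0, (\<lambda>_. 0)) \<in> carrier (GGamma n E)" by (simp add: GG_carrier a0_def)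
  have "d dvd z v1" using two(1) unfolding d_def by (simp add: Gcd_dvd)
  then have "a0 v1 \<noteq> 0" using two(1,4) by (auto simp: a0_def)
  note P = parts[OF hc this cent_char[where tz=tz, OF sym disj_union two az_def a0_def[unfolded d_def]]]
  show ?thesis
    unfolding Let_def g h derived_GG d_def[symmetric]
    using P by (simp add: d_def)
qed
end
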